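(* Let $G\subset\operatorname{SL}(n,\mathbb{k})$ be a finite abelian subgroup and let $\mathscr{E}=(E_\rho:\rho\in G^* )$ be the collection of modules of semi-invariants on $X=\mathbb{A}^n_{\mathbb{k}}/G$. Then the toric algebra $A_{\mathscr{E}}$ is consistent, i.e. $J_W=J_{\mathscr{E}}$.
   Context: $\mathbb{k}$ is an algebraically closed field whose characteristic does not divide $|G|$; $G$ is taken to consist of diagonal matrices, and $\rho_i\in G^*=\operatorname{Hom}(G,\mathbb{k}^\times)$ is the $i$-th diagonal entry. $G$ acts on $\mathbb{k}[x_1,\dots,x_n]$ with $x_i$ of weight $\rho_i$; $R=\mathbb{k}[x_1,\dots,x_n]^G$, $X=\operatorname{Spec}R$ (a Gorenstein affine toric variety with Cox ring $\mathbb{k}[x_1,\dots,x_n]$ and $\operatorname{Cl}(X)\cong G^*$), and $E_\rho$ is the $R$-module spanned by semi-invariant polynomials of weight $\rho$ ($E_{1}=R$). The quiver of sections of $\mathscr{E}$ is the McKay quiver $Q$: vertices $G^*$ and arrows $a_i^\rho:\rho\to\rho\rho_i$ with label monomial $x_i$, for $\rho\in G^*$, $1\le i\le n$ (paths composed right to left; the label of a path is the product of labels of its arrows). $J_{\mathscr{E}}$ is the two-sided ideal of $\mathbb{k}Q$ generated by $p^+-p^-$ for all pairs of paths with equal head, tail and label monomial; it is generated by $a_i^{\rho\rho_j}a_j^\rho-a_j^{\rho\rho_i}a_i^\rho$. A cycle is anticanonical if its label is $x_1x_2\cdots x_n$. For a path $q$, $\partial_qW$ is the sum of all paths $p$ with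 $pq$ an anticanonical cycle; $\mathscr{P}$ is the set of paths $q$ with $\partial_qW$ a sum of precisely two paths sharing neither initial nor final arrow; $J_W$ is generated by $p^+-p^-$ whenever $\partial_qW=p^++p^-$ with $q\in\mathscr{P}$. Consistency means $J_W=J_{\mathscr{E}}$. *)

theory Defs
  imports "HOL-Computational_Algebra.Polynomial" "HOL-Library.FuncSet"
begin

text \<open>A finite abelian subgroup of SL(n,k) consisting of diagonal matrices; a diagonal
matrix is represented by the list of its diagonal entries (length n).
Coordinates are indexed 0..n-1.\<close>

definition diag_SL_group :: "nat \<Rightarrow> 'k::field list set \<Rightarrow> bool" where
  "diag_SL_group n G \<longleftrightarrow> finite G \<and> replicate n 1 \<in> G \<and>
     (\<forall>g\<in>G. length g = n \<and> (\<forall>x\<in>set g. x \<noteq> 0) \<and> prod_list g = 1) \<and>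
     (\<forall>g\<in>G. \<forall>h\<in>G. map2 (*) g h \<in> G) \<and>
     (\<forall>g\<in>G. map inverse g \<in> G)"

definition chars :: "'k::field list set \<Rightarrow> ('k list \<Rightarrow> 'k) set" where
  "chars G = {\<chi>. \<chi> \<in> extensional G \<and> (\<forall>g\<in>G. \<chi> g \<noteq> 0) \<and>
                 (\<forall>g\<in>G. \<forall>h\<in>G. \<chi> (map2 (*) g h) = \<chi> g * \<chi> h)}"

definition chmul :: "'k::field list set \<Rightarrow> ('k list \<Rightarrow> 'k) \<Rightarrow> ('k list \<Rightarrow> 'k) \<Rightarrow> ('k list \<Rightarrow> 'k)" where
  "chmul G \<chi> \<psi> = (\<lambda>g\<in>G. \<chi> g * \<psi> g)"

definition rho :: "'k::field list set \<Rightarrow> nat \<Rightarrow> ('k list \<Rightarrow> 'k)" where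
  "rho G i = (\<lambda>g\<in>G. g ! i)"

text \<open>Paths in the McKay quiver: a tail vertex together with the list of arrow indices
in the order in which they are traversed.  The arrow with index i leaving vertex
\<rho> is a_i^\<rho> : \<rho> \<rightarrow> \<rho> \<rho>_i, labelled x_i.\<close>

type_synonym 'k path = "('k list \<Rightarrow> 'k) \<times> nat list"

definition ptail :: "'k path \<Rightarrow> ('k list \<Rightarrow> 'k)" where
  "ptail p = fst p"

definition phead :: "'k::field list set \<Rightarrow> 'k path \<Rightarrow> ('k list \<Rightarrow> 'k)" where
  "phead G p = foldl (\<lambda>\<chi> i. chmul G \<chi> (rho G i)) (fst p) (snd p)"

text \<open>The label monomial x^a of a path, as the multiset a of variable indices.\<close>
definition plabel :: "'k path \<Rightarrow> nat multiset" where
  "plabel p = mset (snd p)"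

definition valid_path :: "nat \<Rightarrow> 'k::field list set \<Rightarrow> 'k path \<Rightarrow> bool" where
  "valid_path n G p \<longleftrightarrow> fst p \<in> chars G \<and> (\<forall>i\<in>set (snd p). i < n)"

text \<open>Composition p q (q first, then p), defined when head q = tail p.\<close>
definition pcomp :: "'k::field list set \<Rightarrow> 'k path \<Rightarrow> 'k path \<Rightarrow> 'k path option" where
  "pcomp G p q = (if phead G q = ptail p then Some (fst q, snd q @ snd p) else None)"

text \<open>The path algebra kQ: finitely supported k-valued functions on paths.\<close>
definition path_alg :: "nat \<Rightarrow> 'k::field list set \<Rightarrow> ('k path \<Rightarrow> 'k) set" where
  "path_alg n G = {f. finite {p. f p \<noteq> 0} \<and> (\<forall>p. f p \<noteq> 0 \<longrightarrow> valid_path n G p)}"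

definition pbasis :: "'k path \<Rightarrow> ('k path \<Rightarrow> 'k::field)" where
  "pbasis p = (\<lambda>r. if r = p then 1 else 0)"

definition pmul :: "'k::field list set \<Rightarrow> ('k path \<Rightarrow> 'k) \<Rightarrow> ('k path \<Rightarrow> 'k) \<Rightarrow> ('k path \<Rightarrow> 'k)" where
  "pmul G f h = (\<lambda>r. \<Sum>(p, q)\<in>{(p, q). f p \<noteq> 0 \<and> h q \<noteq> 0 \<and> pcomp G p q = Some r}. f p * h q)"

inductive_set ideal_gen :: "nat \<Rightarrow> 'k::field list set \<Rightarrow> ('k path \<Rightarrow> 'k) set \<Rightarrow> ('k path \<Rightarrow> 'k) set"
  for n G S where
  zero: "(\<lambda>_. 0) \<in> ideal_gen n G S"
| gen: "s \<in> S \<Longrightarrow> s \<in> ideal_gen n G S"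
| add: "a \<in> ideal_gen n G S \<Longrightarrow> b \<in> ideal_gen n G S \<Longrightarrow> (\<lambda>r. a r + b r) \<in> ideal_gen n G S"
| smult: "a \<in> ideal_gen n G S \<Longrightarrow> (\<lambda>r. c * a r) \<in> ideal_gen n G S"
| lmult: "a \<in> ideal_gen n G S \<Longrightarrow> u \<in> path_alg n G \<Longrightarrow> pmul G u a \<in> ideal_gen n G S"
| rmult: "a \<in> ideal_gen n G S \<Longrightarrow> u \<in> path_alg n G \<Longrightarrow> pmul G a u \<in> ideal_gen n G S"

definition JE_gens :: "nat \<Rightarrow> 'k::field list set \<Rightarrow> ('k path \<Rightarrow> 'k) set" where
  "JE_gens n G = {(\<lambda>r. pbasis pp r - pbasis pm r) | pp pm.
      valid_path n G pp \<and> valid_path n G pm \<and> ptail pp = ptail pm \<and>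
      phead G pp = phead G pm \<and> plabel pp = plabel pm}"

definition anticanonical :: "nat \<Rightarrow> 'k::field list set \<Rightarrow> 'k path \<Rightarrow> bool" where
  "anticanonical n G c \<longleftrightarrow> valid_path n G c \<and> phead G c = ptail c \<and> plabel c = mset [0..<n]"

text \<open>\<partial>_q W : the sum of all paths p such that p q is an anticanonical cycle.\<close>
definition dW :: "nat \<Rightarrow> 'k::field list set \<Rightarrow> 'k path \<Rightarrow> ('k path \<Rightarrow> 'k)" where
  "dW n G q = (\<lambda>p. if valid_path n G p \<and> (\<exists>c. pcomp G p q = Some c \<and> anticanonical n G c)
                 then 1 else 0)"

definition two_term :: "nat \<Rightarrow> 'k::field list set \<Rightarrow> 'k path \<Rightarrow> 'k path \<Rightarrow> 'k path \<Rightarrow> bool" where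
  "two_term n G q pp pm \<longleftrightarrow> pp \<noteq> pm \<and> dW n G q = (\<lambda>r. pbasis pp r + pbasis pm r) \<and>
     snd pp \<noteq> [] \<and> snd pm \<noteq> [] \<and>
     \<not> (ptail pp = ptail pm \<and> hd (snd pp) = hd (snd pm)) \<and>
     \<not> (phead G pp = phead G pm \<and> last (snd pp) = last (snd pm))"

definition JW_gens :: "nat \<Rightarrow> 'k::field list set \<Rightarrow> ('k path \<Rightarrow> 'k) set" where
  "JW_gens n G = {(\<lambda>r. pbasis pp r - pbasis pm r) | q pp pm.
      valid_path n G q \<and> two_term n G q pp pm}"

end

theory Submission
  imports Defs
begin

definition pd :: "'k path \<Rightarrow> 'k path \<Rightarrow> ('k path \<Rightarrow> 'k::field)" where
  "pd a b = (\<lambda>r. pbasis a r - pbasis b r)"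

lemma ideal_gen_mono:
  assumes "S \<subseteq> ideal_gen n G T"
  shows "ideal_gen n G S \<subseteq> ideal_gen n G T"
proof
  fix x assume "x \<in> ideal_gen n G S"
  then show "x \<in> ideal_gen n G T"
    by induction (use assms in \<open>auto intro: ideal_gen.intros\<close>)
qed

lemma phead_formula:
  assumes "v \<in> extensional G"
  shows "phead G (v, w) = (\<lambda>g\<in>G. v g * prod_list (map (\<lambda>i. g!i) w))"
  using assms
proof (induction w arbitrary: v)
  case Nil
  then show ?case by (simp add: phead_def extensional_restrict)
next
  case (Cons i w)
  have e: "chmul G v (rho G i) \<in> extensional G" by (simp add: chmul_def)
  have "phead G (v, i # w) = phead G (chmul G v (rho G i), w)"
    by (simp add: phead_def)
  also have "\<dots> = (\<lambda>g\<in>G. v g * prod_list (map (\<lambda>i. g!i) (i # w)))"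
  proof -
    have c: "chmul G v (rho G i) = (\<lambda>g\<in>G. v g * g!i)"
      by (simp add: chmul_def rho_def fun_eq_iff)
    show ?thesis unfolding Cons.IH[OF e] unfolding c
      by (intro restrict_ext) (simp add: mult.assoc)
  qed
  finally show ?case .
qed

lemma phead_append: "phead G (v, w1 @ w2) = phead G (phead G (v, w1), w2)"
  by (simp add: phead_def)

lemma prod_list_mset:
  "mset xs = mset ys \<Longrightarrow> prod_list (map f xs) = prod_list (map f ys :: 'a::comm_monoid_mult list)"
  by (metis mset_map prod_mset_prod_list)

lemma chars_step:
  assumes G: "diag_SL_group n G" and v: "v \<in> chars G" and i: "i < n"
  shows "phead G (v, [i]) \<in> chars G"
proof -
  have ve: "v \<in> extensional G" using v by (simp add: chars_def)
  have len: "\<And>g. g \<in> G \<Longrightarrow> length g = n" and nz: "\<And>g x. g \<in> G \<Longrightarrow> x \<in> set g \<Longrightarrow> x \<noteq> 0"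
    using G by (auto simp: diag_SL_group_def)
  have ph: "phead G (v, [i]) = (\<lambda>g\<in>G. v g * g!i)"
    by (simp add: phead_formula[OF ve])
  show ?thesis
    unfolding ph chars_def
  proof (intro CollectI conjI ballI)
    show "(\<lambda>g\<in>G. v g * g ! i) \<in> extensional G" by simp
  next
    fix g assume g: "g \<in> G"
    have "g ! i \<noteq> 0" using nz[OF g] len[OF g] i by auto
    moreover have "v g \<noteq> 0" using v g by (simp add: chars_def)
    ultimately show "(\<lambda>g\<in>G. v g * g ! i) g \<noteq> 0" using g by simp
  next
    fix g h assume g: "g \<in> G" and h: "h \<in> G"
    have gh: "map2 (*) g h \<in> G" using G g h by (simp add: diag_SL_group_def)
    have "map2 (*) g h ! i = g ! i * h ! i" using len[OF g] len[OF h] i by simp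
    moreover have "v (map2 (*) g h) = v g * v h" using v g h by (simp add: chars_def)
    ultimately show "(\<lambda>g\<in>G. v g * g ! i) (map2 (*) g h) =
       (\<lambda>g\<in>G. v g * g ! i) g * (\<lambda>g\<in>G. v g * g ! i) h"
      using g h gh by (simp add: algebra_simps)
  qed
qed

lemma chars_path:
  assumes G: "diag_SL_group n G" and v: "v \<in> chars G" and w: "\<forall>i\<in>set w. i < n"
  shows "phead G (v, w) \<in> chars G"
  using v w
proof (induction w arbitrary: v)
  case Nil
  then show ?case by (simp add: phead_def)
next
  case (Cons i w)
  have "phead G (v, i # w) = phead G (phead G (v, [i]), w)"
    using phead_append[of G v "[i]" w] by simp
  then show ?case using Cons chars_step[OF G] by simp
qed


lemma pd_nz: "p1 \<noteq> p2 \<Longrightarrow> pd p1 p2 q \<noteq> 0 \<longleftrightarrow> q = p1 \<or> q = p2"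
  by (auto simp: pd_def pbasis_def)

lemma pmul_left:
  assumes ne: "p1 \<noteq> p2" and c1: "pcomp G a p1 = Some c1" and c2: "pcomp G a p2 = Some c2"
  shows "pmul G (pbasis a) (pd p1 p2) = pd c1 c2"
proof
  fix r
  let ?S = "{(p, q). pbasis a p \<noteq> 0 \<and> pd p1 p2 q \<noteq> 0 \<and> pcomp G p q = Some r}"
  have S: "?S = (if c1 = r then {(a,p1)} else {}) \<union> (if c2 = r then {(a,p2)} else {})"
    using ne c1 c2 by (auto simp: pd_nz pbasis_def split: if_splits)
  show "pmul G (pbasis a) (pd p1 p2) r = pd c1 c2 r"
    unfolding pmul_def S using ne by (auto simp: pd_def pbasis_def)
qed

lemma pmul_right:
  assumes ne: "p1 \<noteq> p2" and c1: "pcomp G p1 a = Some c1" and c2: "pcomp G p2 a = Some c2"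
  shows "pmul G (pd p1 p2) (pbasis a) = pd c1 c2"
proof
  fix r
  let ?S = "{(p, q). pd p1 p2 p \<noteq> 0 \<and> pbasis a q \<noteq> 0 \<and> pcomp G p q = Some r}"
  have S: "?S = (if c1 = r then {(p1,a)} else {}) \<union> (if c2 = r then {(p2,a)} else {})"
    using ne c1 c2 by (auto simp: pd_nz pbasis_def split: if_splits)
  show "pmul G (pd p1 p2) (pbasis a) r = pd c1 c2 r"
    unfolding pmul_def S using ne by (auto simp: pd_def pbasis_def)
qed

lemma pbasis_alg: "valid_path n G a \<Longrightarrow> pbasis a \<in> path_alg n G"
proof -
  assume "valid_path n G a"
  moreover have "{p. pbasis a p \<noteq> 0} = {a}"
    by (auto simp: pbasis_def)
  ultimately show ?thesis by (auto simp: path_alg_def pbasis_def)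
qed


lemma mset_two: "mset xs = {#i,j#} \<Longrightarrow> xs = [i,j] \<or> xs = [j,i]"
proof -
  assume h: "mset xs = {#i,j#}"
  have "size (mset xs) = 2" unfolding h by simp
  then have "length xs = 2" by simp
  then obtain a b where xs: "xs = [a,b]"
    by (auto simp: numeral_2_eq_2 length_Suc_conv)
  have "add_mset a {#b#} = add_mset i {#j#}" using h xs by simp
  then show ?thesis using xs by (auto simp: add_eq_conv_ex)
qed

lemma pd_same: "pd p p = (\<lambda>_. 0)"
  by (simp add: pd_def)

lemma prod_all:
  assumes G: "diag_SL_group n G" and g: "g \<in> G" and m: "mset xs = mset [0..<n]"
  shows "prod_list (map ((!) g) xs) = 1"
proof -
  have len: "length g = n" using G g by (simp add: diag_SL_group_def)
  have "prod_list (map ((!) g) xs) = prod_list (map ((!) g) [0..<n])"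
    using prod_list_mset[OF m] .
  also have "\<dots> = prod_list g" using len map_nth[of g] by simp
  also have "\<dots> = 1" using G g by (simp add: diag_SL_group_def)
  finally show ?thesis .
qed

lemma head_cycle:
  assumes G: "diag_SL_group n G" and v: "v \<in> chars G" and m: "mset w = mset [0..<n]"
  shows "phead G (v, w) = v"
proof -
  have ve: "v \<in> extensional G" using v by (simp add: chars_def)
  have "phead G (v, w) = (\<lambda>g\<in>G. v g)"
    unfolding phead_formula[OF ve] by (intro restrict_ext) (simp add: prod_all[OF G _ m])
  also have "\<dots> = v" using ve by (simp add: extensional_restrict)
  finally show ?thesis .
qed

lemma swap_gen:
  assumes G: "diag_SL_group n G" and v: "v \<in> chars G" and i: "i < n" and j: "j < n" and ij: "i \<noteq> j"
  shows "pd (v, [i,j]) (v, [j,i]) \<in> JW_gens n G"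
proof -
  define w0 where "w0 = phead G (v, [i,j])"
  define ks where "ks = sorted_list_of_set ({0..<n} - {i,j})"
  define q where "q = (w0, ks)"
  have w0c: "w0 \<in> chars G" unfolding w0_def using chars_path[OF G v] i j by simp
  have ksn: "\<forall>k\<in>set ks. k < n" by (simp add: ks_def)
  have mks: "mset ks = mset_set ({0..<n} - {i,j})"
    unfolding ks_def by (metis mset_sorted_list_of_multiset sorted_list_of_mset_set)
  have un: "{0..<n} = ({0..<n} - {i,j}) \<union> {i,j}" using i j by auto
  have "mset [0..<n] = mset_set {0..<n}" by (simp add: mset_upt)
  also have "\<dots> = mset_set ({0..<n} - {i,j}) + mset_set {i,j}"
    by (subst un, rule mset_set_Union) auto
  also have "\<dots> = mset ks + {#i,j#}" using ij mks by simp
  finally have mall: "mset [0..<n] = mset ks + {#i,j#}" .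
  have m1: "mset ([i,j] @ ks) = mset [0..<n]" using mall by simp
  have m2: "mset (ks @ [i,j]) = mset [0..<n]" using mall by simp
  have m3: "mset (ks @ [j,i]) = mset [0..<n]" using mall by simp
  have hq: "phead G q = v"
    unfolding q_def w0_def using phead_append[of G v "[i,j]" ks] head_cycle[OF G v m1] by simp
  have vq: "valid_path n G q" using w0c ksn by (simp add: valid_path_def q_def)
  let ?M1 = "(v, [i,j])" and ?M2 = "(v, [j,i])"
  have key: "(valid_path n G p \<and> (\<exists>c. pcomp G p q = Some c \<and> anticanonical n G c))
             \<longleftrightarrow> p = ?M1 \<or> p = ?M2" for p
  proof
    assume "valid_path n G p \<and> (\<exists>c. pcomp G p q = Some c \<and> anticanonical n G c)"
    then obtain c where pc: "pcomp G p q = Some c" and ac: "anticanonical n G c" by blast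
    have fp: "fst p = v" and c: "c = (w0, ks @ snd p)"
      using pc hq by (auto simp: pcomp_def ptail_def q_def split: if_splits)
    have "mset ks + mset (snd p) = mset ks + {#i,j#}"
      using ac mall by (simp add: anticanonical_def c plabel_def)
    then have "mset (snd p) = {#i,j#}" by simp
    then have "snd p = [i,j] \<or> snd p = [j,i]" by (rule mset_two)
    then show "p = ?M1 \<or> p = ?M2" using fp by (cases p) auto
  next
    assume p: "p = ?M1 \<or> p = ?M2"
    have vp: "valid_path n G p" using p v i j by (auto simp: valid_path_def)
    have "pcomp G p q = Some (w0, ks @ snd p)"
      using p hq by (auto simp: pcomp_def ptail_def q_def)
    moreover have "anticanonical n G (w0, ks @ snd p)"
    proof -
      have ms: "mset (ks @ snd p) = mset [0..<n]" using p m2 m3 by auto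
      show ?thesis unfolding anticanonical_def valid_path_def plabel_def ptail_def
        using w0c ksn p i j head_cycle[OF G w0c ms] ms by auto
    qed
    ultimately show "valid_path n G p \<and> (\<exists>c. pcomp G p q = Some c \<and> anticanonical n G c)"
      using vp by blast
  qed
  have dq: "dW n G q = (\<lambda>r. pbasis ?M1 r + pbasis ?M2 r)"
  proof
    fix r show "dW n G q r = pbasis ?M1 r + pbasis ?M2 r"
      unfolding dW_def using key[of r] ij by (auto simp: pbasis_def)
  qed
  have tt: "two_term n G q ?M1 ?M2"
    unfolding two_term_def using dq ij by (simp add: ptail_def)
  show ?thesis unfolding JW_gens_def pd_def using vq tt by blast
qed


lemma pd_trans:
  assumes "pd a b \<in> ideal_gen n G S" "pd b c \<in> ideal_gen n G S"
  shows "pd a c \<in> ideal_gen n G S"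
proof -
  have "(\<lambda>r. pd a b r + pd b c r) \<in> ideal_gen n G S" using assms by (rule ideal_gen.add)
  moreover have "(\<lambda>r. pd a b r + pd b c r) = pd a c" by (simp add: pd_def fun_eq_iff)
  ultimately show ?thesis by simp
qed

lemma pd_refl: "pd a a \<in> ideal_gen n G S"
  using ideal_gen.zero by (simp add: pd_same)

lemma swap_ideal:
  assumes G: "diag_SL_group n G" and v: "v \<in> chars G" and i: "i < n" and j: "j < n"
    and s: "\<forall>k\<in>set s. k < n"
  shows "pd (v, i # j # s) (v, j # i # s) \<in> ideal_gen n G (JW_gens n G)"
proof (cases "i = j")
  case True then show ?thesis by (simp add: pd_refl)
next
  case ij: False
  have ve: "v \<in> extensional G" using v by (simp add: chars_def)
  have hh: "phead G (v, [j,i]) = phead G (v, [i,j])"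
    by (simp add: phead_formula[OF ve] mult_ac)
  define a where "a = (phead G (v, [i,j]), s)"
  have va: "valid_path n G a" unfolding a_def valid_path_def
    using chars_path[OF G v] i j s by simp
  have c1: "pcomp G a (v, [i,j]) = Some (v, i # j # s)" by (simp add: pcomp_def a_def ptail_def)
  have c2: "pcomp G a (v, [j,i]) = Some (v, j # i # s)" using hh by (simp add: pcomp_def a_def ptail_def)
  have "pmul G (pbasis a) (pd (v, [i,j]) (v, [j,i])) \<in> ideal_gen n G (JW_gens n G)"
    by (rule ideal_gen.lmult[OF ideal_gen.gen[OF swap_gen[OF G v i j ij]] pbasis_alg[OF va]])
  then show ?thesis using pmul_left[OF _ c1 c2] ij by simp
qed

lemma prefix_ideal:
  assumes G: "diag_SL_group n G" and v: "v \<in> chars G" and x: "x < n"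
    and h: "pd (phead G (v, [x]), w1) (phead G (v, [x]), w2) \<in> ideal_gen n G S"
  shows "pd (v, x # w1) (v, x # w2) \<in> ideal_gen n G S"
proof (cases "w1 = w2")
  case True then show ?thesis by (simp add: pd_refl)
next
  case False
  have va: "valid_path n G (v, [x])" using v x by (simp add: valid_path_def)
  have c1: "pcomp G (phead G (v, [x]), w1) (v, [x]) = Some (v, x # w1)" by (simp add: pcomp_def ptail_def)
  have c2: "pcomp G (phead G (v, [x]), w2) (v, [x]) = Some (v, x # w2)" by (simp add: pcomp_def ptail_def)
  have "pmul G (pd (phead G (v, [x]), w1) (phead G (v, [x]), w2)) (pbasis (v, [x])) \<in> ideal_gen n G S"
    by (rule ideal_gen.rmult[OF h pbasis_alg[OF va]])
  then show ?thesis using pmul_right[OF _ c1 c2] False by simp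
qed

lemma move_ideal:
  assumes G: "diag_SL_group n G"
  shows "v \<in> chars G \<Longrightarrow> x < n \<Longrightarrow> \<forall>k\<in>set (a @ b). k < n \<Longrightarrow>
     pd (v, x # a @ b) (v, a @ x # b) \<in> ideal_gen n G (JW_gens n G)"
proof (induction a arbitrary: v)
  case Nil then show ?case by (simp add: pd_refl)
next
  case (Cons y a)
  have y: "y < n" using Cons.prems by simp
  have v': "phead G (v, [y]) \<in> chars G" using chars_path[OF G Cons.prems(1)] y by simp
  have 1: "pd (v, x # y # a @ b) (v, y # x # a @ b) \<in> ideal_gen n G (JW_gens n G)"
    using swap_ideal[OF G Cons.prems(1) Cons.prems(2) y] Cons.prems(3) by simp
  have 2: "pd (v, y # x # a @ b) (v, y # a @ x # b) \<in> ideal_gen n G (JW_gens n G)"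
    by (rule prefix_ideal[OF G Cons.prems(1) y Cons.IH[OF v' Cons.prems(2)]]) (use Cons.prems(3) in simp)
  show ?case using pd_trans[OF 1 2] by simp
qed

lemma perm_ideal:
  assumes G: "diag_SL_group n G"
  shows "v \<in> chars G \<Longrightarrow> \<forall>k\<in>set w. k < n \<Longrightarrow> mset w = mset w' \<Longrightarrow>
     pd (v, w) (v, w') \<in> ideal_gen n G (JW_gens n G)"
proof (induction w arbitrary: v w')
  case Nil then show ?case by (simp add: pd_refl)
next
  case (Cons x w1)
  have "x \<in> set w'" using Cons.prems(3) by (metis list.set_intros(1) set_mset_mset)
  then obtain a b where w': "w' = a @ x # b" by (meson split_list)
  have m: "mset w1 = mset (a @ b)" using Cons.prems(3) w' by simp
  have x: "x < n" using Cons.prems by simp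
  have sab: "\<forall>k\<in>set (a @ b). k < n" using Cons.prems(2) m by (metis list.set_intros(2) set_mset_mset)
  have v': "phead G (v, [x]) \<in> chars G" using chars_path[OF G Cons.prems(1)] x by simp
  have 1: "pd (v, x # w1) (v, x # a @ b) \<in> ideal_gen n G (JW_gens n G)"
    by (rule prefix_ideal[OF G Cons.prems(1) x Cons.IH[OF v' _ m]]) (use Cons.prems(2) in simp)
  have 2: "pd (v, x # a @ b) (v, a @ x # b) \<in> ideal_gen n G (JW_gens n G)"
    by (rule move_ideal[OF G Cons.prems(1) x sab])
  show ?case using pd_trans[OF 1 2] w' by simp
qed

lemma JE_sub:
  assumes G: "diag_SL_group n G"
  shows "JE_gens n G \<subseteq> ideal_gen n G (JW_gens n G)"
proof
  fix f assume "f \<in> JE_gens n G"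
  then obtain pp pm where f: "f = pd pp pm" and vp: "valid_path n G pp" and vm: "valid_path n G pm"
    and t: "ptail pp = ptail pm" and l: "plabel pp = plabel pm"
    unfolding JE_gens_def pd_def by blast
  obtain v w where pp: "pp = (v, w)" by (cases pp)
  obtain w' where pm: "pm = (v, w')" using t pp by (cases pm) (auto simp: ptail_def)
  show "f \<in> ideal_gen n G (JW_gens n G)"
    unfolding f pp pm
    by (rule perm_ideal[OF G]) (use vp l pp pm in \<open>auto simp: valid_path_def plabel_def\<close>)
qed

lemma JW_sub: "JW_gens n G \<subseteq> JE_gens n G"
proof
  fix f assume "f \<in> JW_gens n G"
  then obtain q pp pm where f: "f = (\<lambda>r. pbasis pp r - pbasis pm r)"
    and vq: "valid_path n G q" and tt: "two_term n G q pp pm"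
    unfolding JW_gens_def by blast
  have ne: "pp \<noteq> pm" and dq: "dW n G q = (\<lambda>r. pbasis pp r + pbasis pm r)"
    using tt by (auto simp: two_term_def)
  have "dW n G q pp = 1" "dW n G q pm = 1" using dq ne by (auto simp: pbasis_def)
  then have A: "valid_path n G pp \<and> (\<exists>c. pcomp G pp q = Some c \<and> anticanonical n G c)"
    and B: "valid_path n G pm \<and> (\<exists>c. pcomp G pm q = Some c \<and> anticanonical n G c)"
    by (auto simp: dW_def split: if_splits)
  obtain c1 where c1: "pcomp G pp q = Some c1" "anticanonical n G c1" using A by blast
  obtain c2 where c2: "pcomp G pm q = Some c2" "anticanonical n G c2" using B by blast
  have t1: "phead G q = ptail pp" and e1: "c1 = (fst q, snd q @ snd pp)"
    using c1(1) by (auto simp: pcomp_def split: if_splits)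
  have t2: "phead G q = ptail pm" and e2: "c2 = (fst q, snd q @ snd pm)"
    using c2(1) by (auto simp: pcomp_def split: if_splits)
  have h1: "phead G pp = fst q"
  proof -
    have "phead G c1 = phead G (phead G q, snd pp)"
      unfolding e1 using phead_append[of G "fst q" "snd q" "snd pp"] by simp
    also have "\<dots> = phead G pp" using t1 by (cases pp) (simp add: ptail_def)
    finally show ?thesis using c1(2) e1 by (simp add: anticanonical_def ptail_def)
  qed
  have h2: "phead G pm = fst q"
  proof -
    have "phead G c2 = phead G (phead G q, snd pm)"
      unfolding e2 using phead_append[of G "fst q" "snd q" "snd pm"] by simp
    also have "\<dots> = phead G pm" using t2 by (cases pm) (simp add: ptail_def)
    finally show ?thesis using c2(2) e2 by (simp add: anticanonical_def ptail_def)
  qed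
  have "mset (snd q) + mset (snd pp) = mset (snd q) + mset (snd pm)"
    using c1(2) c2(2) e1 e2 by (simp add: anticanonical_def plabel_def)
  then have l: "plabel pp = plabel pm" by (simp add: plabel_def)
  have "ptail pp = ptail pm" using t1 t2 by simp
  moreover have "phead G pp = phead G pm" using h1 h2 by simp
  ultimately show "f \<in> JE_gens n G"
    unfolding JE_gens_def f using A B l by blast
qed

theorem proposition4p2:
  fixes G :: "'k::alg_closed_field list set" and n :: nat
  assumes "diag_SL_group n G"
    and "\<not> CHAR('k) dvd card G"
  shows "ideal_gen n G (JW_gens n G) = ideal_gen n G (JE_gens n G)"
proof
  show "ideal_gen n G (JW_gens n G) \<subseteq> ideal_gen n G (JE_gens n G)"
    by (rule ideal_gen_mono) (use JW_sub in \<open>auto intro: ideal_gen.gen\<close>)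
  show "ideal_gen n G (JE_gens n G) \<subseteq> ideal_gen n G (JW_gens n G)"
    by (rule ideal_gen_mono[OF JE_sub[OF assms(1)]])
qed

end
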